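(* Let $W$ be a linear space over $\mathbb{K}\in\{\mathbb{R},\mathbb{C}\}$, let $0<q\le 1$, and let $V\neq\{0\}$ be a $W$-spreading $q$-space. Then the (algebraic) dimension of $V$ is at least $\mathfrak{c}$, the cardinality of the continuum.
   Context: For $0<q\le 1$, a $q$-norm on a linear space $X$ is a map $\|\cdot\|\colon X\to[0,\infty)$ with $\|x\|=0$ iff $x=0$, $\|\lambda x\|=|\lambda|\,\|x\|$, and $\|x+y\|^q\le\|x\|^q+\|y\|^q$; a $q$-Banach space is a space with a complete $q$-norm. $W^{\mathbb{N}}$ denotes the linear space of all $W$-valued sequences with coordinatewise operations. A $W$-spreading $q$-space is a linear subspace $V$ of $W^{\mathbb{N}}$ endowed with a complete $q$-norm $\|\cdot\|_V$ such that: whenever $(a_j)_{j=1}^\infty\in V$ and $\mathbb{N}_0=\{j_1<j_2<j_3<\cdots\}$ is an infinite subset of $\mathbb{N}$, the sequence $(b_k)_{k=1}^\infty$ defined by $b_k=a_i$ if $k=j_i$ and $b_k=0$ if $k\notin\mathbb{N}_0$ belongs to $V$ and satisfies $\|(b_k)_k\|_V\le\|(a_j)_j\|_V$. *)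

theory Defs
  imports Complex_Main "HOL-Library.Function_Algebras"
begin

text \<open>Addition, subtraction and zero on \<open>nat \<Rightarrow> 'w\<close> are the coordinatewise
  ones from Function_Algebras.\<close>
definition seq_scale :: "('k \<Rightarrow> 'w \<Rightarrow> 'w) \<Rightarrow> 'k \<Rightarrow> (nat \<Rightarrow> 'w) \<Rightarrow> (nat \<Rightarrow> 'w)" where
  "seq_scale s c x = (\<lambda>j. s c (x j))"

definition is_q_norm_on ::
  "('k::real_normed_field \<Rightarrow> 'v \<Rightarrow> 'v) \<Rightarrow> real \<Rightarrow> 'v::ab_group_add set \<Rightarrow> ('v \<Rightarrow> real) \<Rightarrow> bool" where
  "is_q_norm_on s q V nv \<longleftrightarrow>
     (\<forall>x\<in>V. nv x \<ge> 0) \<and>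
     (\<forall>x\<in>V. nv x = 0 \<longleftrightarrow> x = 0) \<and>
     (\<forall>x\<in>V. \<forall>c. nv (s c x) = norm c * nv x) \<and>
     (\<forall>x\<in>V. \<forall>y\<in>V. nv (x + y) powr q \<le> nv x powr q + nv y powr q)"

definition complete_wrt :: "'v::ab_group_add set \<Rightarrow> ('v \<Rightarrow> real) \<Rightarrow> bool" where
  "complete_wrt V nv \<longleftrightarrow>
     (\<forall>X :: nat \<Rightarrow> 'v. (\<forall>n. X n \<in> V) \<and>
        (\<forall>e>0. \<exists>N. \<forall>m\<ge>N. \<forall>n\<ge>N. nv (X m - X n) < e) \<longrightarrow>
        (\<exists>x\<in>V. (\<lambda>n. nv (X n - x)) \<longlonglongrightarrow> 0))"

text \<open>The spread of a sequence a along the strictly increasing enumeration g of an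
  infinite subset of N: b (g i) = a i, and b k = 0 for k outside the range of g.\<close>
definition spread :: "(nat \<Rightarrow> nat) \<Rightarrow> (nat \<Rightarrow> 'w::zero) \<Rightarrow> (nat \<Rightarrow> 'w)" where
  "spread g a = (\<lambda>k. if \<exists>i. g i = k then a (THE i. g i = k) else 0)"

definition spreading_q_space ::
  "('k::real_normed_field \<Rightarrow> 'w::ab_group_add \<Rightarrow> 'w) \<Rightarrow> real \<Rightarrow> (nat \<Rightarrow> 'w) set \<Rightarrow> ((nat \<Rightarrow> 'w) \<Rightarrow> real) \<Rightarrow> bool" where
  "spreading_q_space s q V nv \<longleftrightarrow>
     module.subspace (seq_scale s) V \<and>
     is_q_norm_on (seq_scale s) q V nv \<and>
     complete_wrt V nv \<and>
     (\<forall>a\<in>V. \<forall>g. strict_mono g \<longrightarrow> spread g a \<in> V \<and> nv (spread g a) \<le> nv a)"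

definition dim_ge_continuum :: "('k::field \<Rightarrow> 'v::ab_group_add \<Rightarrow> 'v) \<Rightarrow> 'v set \<Rightarrow> bool" where
  "dim_ge_continuum s V \<longleftrightarrow>
     (\<forall>B. B \<subseteq> V \<and> \<not> module.dependent s B \<and> module.span s B = V \<longrightarrow>
        (\<exists>f :: real \<Rightarrow> 'v. inj f \<and> range f \<subseteq> B))"

end

theory Submission
  imports Defs "HOL-Analysis.Analysis" "HOL-Library.Nat_Bijection"
begin

lemma vs_seq_scale:
  assumes "vector_space s"
  shows "vector_space (seq_scale s)"
proof -
  interpret vector_space s by fact
  show ?thesis
    by unfold_locales (auto simp: seq_scale_def fun_eq_iff scale_right_distrib scale_left_distrib)
qed

lemma spread_at:
  assumes "strict_mono g"
  shows "spread g a (g i) = a i"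
proof -
  have "inj g" using assms strict_mono_imp_inj_on by blast
  then have "(THE j. g j = g i) = i" by (auto simp: inj_eq)
  then show ?thesis by (auto simp: spread_def)
qed

lemma spread_out:
  assumes "k \<notin> range g"
  shows "spread g a k = 0"
  using assms by (auto simp: spread_def)

lemma geom_sum_le:
  fixes e :: "nat \<Rightarrow> real"
  assumes "\<And>k. 0 \<le> e k" "\<And>k. e (Suc k) \<le> e k / 2" "m \<le> M"
  shows "sum e {m..<M} \<le> 2 * e m - 2 * e M"
  using assms(3)
proof (induction M rule: dec_induct)
  case base
  then show ?case using assms(1)[of m] by simp
next
  case (step n)
  then have "sum e {m..<Suc n} = sum e {m..<n} + e n" by simp
  then show ?case using step assms(2)[of n] by linarith
qed


locale sqs =
  fixes s :: "'k::{real_normed_field,heine_borel} \<Rightarrow> 'w::ab_group_add \<Rightarrow> 'w"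
    and q :: real and V :: "(nat \<Rightarrow> 'w) set" and nv :: "(nat \<Rightarrow> 'w) \<Rightarrow> real"
  assumes vs: "vector_space s" and qpos: "0 < q" and qle: "q \<le> 1"
    and sp: "spreading_q_space s q V nv"
begin

sublocale W: vector_space "seq_scale s"
  using vs_seq_scale[OF vs] .

definition rho where "rho x = nv x powr q"

lemma subV: "W.subspace V"
  using sp by (simp add: spreading_q_space_def)

lemma qn: "is_q_norm_on (seq_scale s) q V nv"
  using sp by (simp add: spreading_q_space_def)

lemma nv_nonneg: "x \<in> V \<Longrightarrow> 0 \<le> nv x"
  using qn by (simp add: is_q_norm_on_def)

lemma nv_zero_iff: "x \<in> V \<Longrightarrow> nv x = 0 \<longleftrightarrow> x = 0"
  using qn by (simp add: is_q_norm_on_def)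

lemma nv_scale: "x \<in> V \<Longrightarrow> nv (seq_scale s c x) = norm c * nv x"
  using qn by (simp add: is_q_norm_on_def)

lemma nv_add: "x \<in> V \<Longrightarrow> y \<in> V \<Longrightarrow> nv (x + y) powr q \<le> nv x powr q + nv y powr q"
  using qn by (simp add: is_q_norm_on_def)

lemma V0: "0 \<in> V" using subV W.subspace_0 by blast
lemma V_add: "x \<in> V \<Longrightarrow> y \<in> V \<Longrightarrow> x + y \<in> V" using subV W.subspace_add by blast
lemma V_scale: "x \<in> V \<Longrightarrow> seq_scale s c x \<in> V" using subV W.subspace_scale by blast
lemma V_diff: "x \<in> V \<Longrightarrow> y \<in> V \<Longrightarrow> x - y \<in> V" using subV W.subspace_diff by blast
lemma V_neg: "x \<in> V \<Longrightarrow> - x \<in> V" using subV W.subspace_neg by blast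
lemma V_sum: "(\<And>i. i \<in> I \<Longrightarrow> f i \<in> V) \<Longrightarrow> sum f I \<in> V"
  using subV W.subspace_sum by blast
lemma span_V: "S \<subseteq> V \<Longrightarrow> W.span S \<subseteq> V"
  using subV W.span_minimal by blast

lemma rho_nonneg: "0 \<le> rho x" by (simp add: rho_def)

lemma rho_pos: "x \<in> V \<Longrightarrow> x \<noteq> 0 \<Longrightarrow> 0 < rho x"
  using nv_zero_iff nv_nonneg by (simp add: rho_def)

lemma rho_0: "rho 0 = 0"
  using nv_zero_iff[OF V0] by (simp add: rho_def)

lemma rho_add: "x \<in> V \<Longrightarrow> y \<in> V \<Longrightarrow> rho (x + y) \<le> rho x + rho y"
  using nv_add by (simp add: rho_def)

lemma rho_scale: "x \<in> V \<Longrightarrow> rho (seq_scale s c x) = norm c powr q * rho x"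
  using nv_scale nv_nonneg by (simp add: rho_def powr_mult)

lemma rho_neg: "x \<in> V \<Longrightarrow> rho (- x) = rho x"
proof -
  assume x: "x \<in> V"
  have "- x = seq_scale s (-1) x" by (simp add: W.scale_minus_left)
  then show ?thesis using rho_scale[OF x, of "-1"] by simp
qed

lemma rho_diff_sym: "x \<in> V \<Longrightarrow> y \<in> V \<Longrightarrow> rho (x - y) = rho (y - x)"
  using rho_neg[OF V_diff, of y x] by simp

lemma rho_diff: "x \<in> V \<Longrightarrow> y \<in> V \<Longrightarrow> rho (x - y) \<le> rho x + rho y"
  using rho_add[of x "-y"] rho_neg[of y] V_neg[of y] by simp

lemma rho_tri: "x \<in> V \<Longrightarrow> y \<in> V \<Longrightarrow> z \<in> V \<Longrightarrow> rho (x - z) \<le> rho (x - y) + rho (y - z)"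
  using rho_add[OF V_diff[of x y] V_diff[of y z]] by simp

lemma rho_sum: "finite I \<Longrightarrow> (\<And>i. i \<in> I \<Longrightarrow> f i \<in> V) \<Longrightarrow> rho (sum f I) \<le> (\<Sum>i\<in>I. rho (f i))"
proof (induction I rule: finite_induct)
  case empty
  then show ?case by (metis order_refl rho_0 sum.empty)
next
  case (insert i I)
  have "rho (sum f (insert i I)) = rho (f i + sum f I)" by (simp only: sum.insert[OF insert(1,2)])
  also have "\<dots> \<le> rho (f i) + rho (sum f I)" using insert by (intro rho_add V_sum) auto
  also have "\<dots> \<le> rho (f i) + (\<Sum>i\<in>I. rho (f i))" using insert by auto
  also have "\<dots> = (\<Sum>i\<in>insert i I. rho (f i))" using insert(1,2) by simp
  finally show ?case .
qed

lemma complete_rho: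
  assumes X: "\<And>n. X n \<in> V" and C: "\<And>e. e > 0 \<Longrightarrow> \<exists>N. \<forall>m\<ge>N. \<forall>n\<ge>N. rho (X m - X n) < e"
  shows "\<exists>x\<in>V. (\<lambda>n. rho (X n - x)) \<longlonglongrightarrow> 0"
proof -
  have cw: "complete_wrt V nv" using sp by (simp add: spreading_q_space_def)
  have "\<exists>N. \<forall>m\<ge>N. \<forall>n\<ge>N. nv (X m - X n) < e" if e: "e > 0" for e
  proof -
    obtain N where N: "\<forall>m\<ge>N. \<forall>n\<ge>N. rho (X m - X n) < e powr q" using C[of "e powr q"] e by auto
    have "nv (X m - X n) < e" if "m \<ge> N" "n \<ge> N" for m n
    proof (rule ccontr)
      assume "\<not> nv (X m - X n) < e"
      then have "e powr q \<le> nv (X m - X n) powr q"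
        using e qpos by (intro powr_mono2) auto
      moreover have "rho (X m - X n) < e powr q" using N that by blast
      ultimately show False by (simp add: rho_def)
    qed
    then show ?thesis by blast
  qed
  then obtain x where x: "x \<in> V" "(\<lambda>n. nv (X n - x)) \<longlonglongrightarrow> 0"
    using cw X unfolding complete_wrt_def by blast
  have "(\<lambda>n. nv (X n - x) powr q) \<longlonglongrightarrow> 0"
    by (rule tendsto_zero_powrI[OF x(2) tendsto_const]) (use qpos nv_nonneg X x(1) V_diff in auto)
  then show ?thesis using x(1) by (auto simp: rho_def)
qed

end


context sqs
begin

lemma dist_pos:
  assumes "finite S" "S \<subseteq> V" "x \<in> V" "x \<notin> W.span S"
  shows "\<exists>\<delta>>0. \<forall>f\<in>W.span S. \<delta> \<le> rho (x - f)"
  using assms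
proof (induction S arbitrary: x rule: finite_induct)
  case empty
  then have "x \<noteq> 0" by (simp add: W.span_empty)
  then have "0 < rho x" using rho_pos empty by blast
  then show ?case by (intro exI[of _ "rho x"]) (auto simp: W.span_empty)
next
  case (insert y S x)
  have SV: "S \<subseteq> V" "y \<in> V" using insert.prems by auto
  have spanV: "W.span (insert y S) \<subseteq> V" using span_V insert.prems by blast
  show ?case
  proof (cases "y \<in> W.span S")
    case True
    then have "W.span (insert y S) = W.span S" by (rule W.span_redundant)
    then show ?thesis using insert.IH[of x] insert.prems SV by auto
  next
    case False
    obtain \<eta> where eta: "\<eta> > 0" "\<forall>g\<in>W.span S. \<eta> \<le> rho (y - g)"
      using insert.IH[of y] SV False by blast
    have lb: "norm c powr q * \<eta> - rho x \<le> rho (x - seq_scale s c y - g)" if g: "g \<in> W.span S" for c g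
    proof (cases "c = 0")
      case True
      then show ?thesis using rho_nonneg[of x] rho_nonneg[of "x - seq_scale s c y - g"] by simp
    next
      case False
      let ?g' = "- seq_scale s (inverse c) g"
      have g'S: "?g' \<in> W.span S" by (simp add: W.span_neg W.span_scale g)
      have gV: "g \<in> V" "?g' \<in> V" using g g'S span_V SV by auto
      have eq: "seq_scale s c (y - ?g') = seq_scale s c y + g"
        using False by (simp add: W.scale_right_distrib)
      have "norm c powr q * \<eta> \<le> norm c powr q * rho (y - ?g')"
        using eta g'S by (intro mult_left_mono) auto
      also have "\<dots> = rho (seq_scale s c y + g)"
        using rho_scale[OF V_diff[OF SV(2) gV(2)], of c] eq by simp
      also have "seq_scale s c y + g = x - (x - seq_scale s c y - g)" by simp
      also have "rho \<dots> \<le> rho x + rho (x - seq_scale s c y - g)"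
        using insert.prems SV gV by (intro rho_diff V_diff V_scale) auto
      finally show ?thesis by simp
    qed
    show ?thesis
    proof (rule ccontr)
      assume "\<not> ?thesis"
      then have "\<forall>\<delta>>0. \<exists>f\<in>W.span (insert y S). rho (x - f) < \<delta>" by (meson not_le)
      then have "\<forall>n. \<exists>f\<in>W.span (insert y S). rho (x - f) < inverse (real (Suc n))" by auto
      then obtain f where f: "\<And>n. f n \<in> W.span (insert y S)" "\<And>n. rho (x - f n) < inverse (real (Suc n))"
        by metis
      have "\<forall>n. \<exists>k. f n - seq_scale s k y \<in> W.span S"
        using f(1) W.span_breakdown_eq by blast
      then obtain c where c: "\<And>n. f n - seq_scale s (c n) y \<in> W.span S"
        by metis
      define g where "g n = f n - seq_scale s (c n) y" for n
      have gS: "g n \<in> W.span S" for n using c by (simp add: g_def)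
      have fn: "x - f n = x - seq_scale s (c n) y - g n" for n by (simp add: g_def)
      define M where "M = ((rho x + 1) / \<eta>) powr (1/q)"
      have cb: "c n \<in> cball 0 M" for n
      proof -
        have "norm (c n) powr q * \<eta> - rho x \<le> rho (x - f n)" using lb[OF gS[of n], of "c n"] fn[of n] by metis
        also have "\<dots> < inverse (real (Suc n))" by (rule f(2))
        also have "\<dots> \<le> 1" by (simp add: inverse_le_1_iff)
        finally have "norm (c n) powr q \<le> (rho x + 1) / \<eta>" using eta by (simp add: pos_le_divide_eq)
        then have "(norm (c n) powr q) powr (1/q) \<le> ((rho x + 1) / \<eta>) powr (1/q)"
          using qpos by (intro powr_mono2) auto
        then have "norm (c n) \<le> M" using qpos by (simp add: powr_powr M_def)
        then show ?thesis by simp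
      qed
      obtain l r where lr: "l \<in> cball 0 M" "strict_mono r" "(c \<circ> r) \<longlonglongrightarrow> l"
        using compact_imp_seq_compact[OF compact_cball, of 0 M] cb unfolding seq_compact_def by metis
      have "x - seq_scale s l y \<notin> W.span S"
      proof
        assume "x - seq_scale s l y \<in> W.span S"
        then have "x \<in> W.span (insert y S)" using W.span_breakdown_eq by blast
        with insert.prems show False by blast
      qed
      then obtain \<delta> where dl: "\<delta> > 0" "\<forall>g\<in>W.span S. \<delta> \<le> rho (x - seq_scale s l y - g)"
        using insert.IH[of "x - seq_scale s l y"] insert.prems SV V_diff V_scale by blast
      have bound: "rho (x - seq_scale s l y - g (r n)) \<le> inverse (real (Suc (r n))) + norm (c (r n) - l) powr q * rho y" for n
      proof -
        have fV: "f (r n) \<in> V" using f(1) spanV by blast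
        have eqv: "x - seq_scale s l y - g (r n) = (x - f (r n)) + seq_scale s (c (r n) - l) y"
          by (simp add: g_def W.scale_left_diff_distrib algebra_simps)
        have "rho (x - seq_scale s l y - g (r n)) = rho ((x - f (r n)) + seq_scale s (c (r n) - l) y)"
          by (simp only: eqv)
        also have "\<dots> \<le> rho (x - f (r n)) + rho (seq_scale s (c (r n) - l) y)"
          using fV insert.prems SV by (intro rho_add V_diff V_scale) auto
        also have "\<dots> \<le> inverse (real (Suc (r n))) + norm (c (r n) - l) powr q * rho y"
          using f(2)[of "r n"] rho_scale[OF SV(2)] by (simp add: less_imp_le)
        finally show ?thesis .
      qed
      have l1: "(\<lambda>n. inverse (real (Suc (r n)))) \<longlonglongrightarrow> 0"
        using LIMSEQ_subseq_LIMSEQ[OF LIMSEQ_inverse_real_of_nat lr(2)] by (simp add: o_def)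
      have "(\<lambda>n. norm (c (r n) - l)) \<longlonglongrightarrow> 0"
        using lr(3) by (simp add: o_def tendsto_norm_zero LIM_zero)
      then have "(\<lambda>n. norm (c (r n) - l) powr q) \<longlonglongrightarrow> 0"
        by (rule tendsto_zero_powrI[OF _ tendsto_const]) (use qpos in auto)
      then have "(\<lambda>n. norm (c (r n) - l) powr q * rho y) \<longlonglongrightarrow> 0"
        by (rule tendsto_mult_left_zero)
      then have "(\<lambda>n. inverse (real (Suc (r n))) + norm (c (r n) - l) powr q * rho y) \<longlonglongrightarrow> 0"
        using l1 tendsto_add_zero by blast
      then have "\<forall>\<^sub>F n in sequentially. inverse (real (Suc (r n))) + norm (c (r n) - l) powr q * rho y < \<delta>"
        using dl(1) by (rule order_tendstoD(2))
      then obtain N where "inverse (real (Suc (r N))) + norm (c (r N) - l) powr q * rho y < \<delta>"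
        by (auto simp: eventually_sequentially)
      with bound[of N] dl(2) gS[of "r N"] show False by fastforce
    qed
  qed
qed

end


definition gm :: "nat \<Rightarrow> nat \<Rightarrow> nat" where "gm m i = prod_encode (m, i)"

lemma gm_mono: "strict_mono (gm m)"
  by (rule strict_mono_Suc_iff[THEN iffD2]) (simp add: gm_def prod_encode_def)

lemma gm_eq: "gm m i = gm m' i' \<longleftrightarrow> m = m' \<and> i = i'"
  by (simp add: gm_def)

locale sqs2 = sqs s q V nv
  for s :: "'k::{real_normed_field,heine_borel} \<Rightarrow> 'w::ab_group_add \<Rightarrow> 'w" and q V nv +
  fixes a :: "nat \<Rightarrow> 'w" and k :: nat
  assumes aV: "a \<in> V" and ak: "a k \<noteq> 0"
begin

definition zz where "zz m = spread (gm m) a"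
definition Zs where "Zs n = zz ` {..<n}"
definition dl where "dl n = (SOME d. d > 0 \<and> (\<forall>f\<in>W.span (Zs n). d \<le> rho (zz n - f)))"
definition Ra where "Ra = max 1 (rho a)"
definition bt where "bt n = min (1/2) (dl n / (4 * Ra))"
definition ee where "ee n = prod bt {..<n}"
definition cc :: "nat \<Rightarrow> 'k" where "cc n = of_real (ee n powr (1/q))"
definition SS where "SS d N = (\<Sum>j<N. seq_scale s (d j * cc j) (zz j))"

lemma zzV: "zz m \<in> V"
  using sp aV gm_mono by (auto simp: spreading_q_space_def zz_def)

lemma rho_zz: "rho (zz m) \<le> Ra"
proof -
  have "nv (zz m) \<le> nv a" using sp aV gm_mono by (auto simp: spreading_q_space_def zz_def)
  then have "rho (zz m) \<le> rho a" unfolding rho_def using qpos nv_nonneg zzV by (intro powr_mono2) auto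
  then show ?thesis by (simp add: Ra_def)
qed

lemma Ra_pos: "0 < Ra" by (simp add: Ra_def)

lemma zz_at: "zz m (gm m k) = a k"
  by (simp add: zz_def spread_at gm_mono)

lemma zz_off: "m' \<noteq> m \<Longrightarrow> zz m' (gm m k) = 0"
  by (auto simp: zz_def gm_eq intro!: spread_out)

lemma zz_notin: "zz n \<notin> W.span (Zs n)"
proof
  assume a: "zz n \<in> W.span (Zs n)"
  let ?H = "{x. x (gm n k) = 0}"
  interpret S: vector_space s by (rule vs)
  have "W.subspace ?H"
    by (auto simp: W.subspace_def seq_scale_def)
  moreover have "Zs n \<subseteq> ?H" by (auto simp: Zs_def zz_off)
  ultimately have "W.span (Zs n) \<subseteq> ?H" by (rule W.span_minimal[rotated])
  with a have "zz n (gm n k) = 0" by blast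
  then show False using zz_at ak by simp
qed

lemma Zs_fin: "finite (Zs n)" and Zs_V: "Zs n \<subseteq> V"
  by (auto simp: Zs_def zzV)

lemma dl_prop: "dl n > 0 \<and> (\<forall>f\<in>W.span (Zs n). dl n \<le> rho (zz n - f))"
  unfolding dl_def
  by (rule someI_ex) (rule dist_pos[OF Zs_fin Zs_V zzV zz_notin])

lemma bt_pos: "0 < bt n" and bt_half: "bt n \<le> 1/2" and bt_dl: "bt n \<le> dl n / (4 * Ra)"
  using dl_prop[of n] Ra_pos by (auto simp: bt_def)

lemma ee_pos: "0 < ee n"
  by (simp add: ee_def bt_pos prod_pos)

lemma ee_Suc: "ee (Suc n) = ee n * bt n"
  by (simp add: ee_def)

lemma ee_half: "ee (Suc n) \<le> ee n / 2"
proof -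
  have "ee n * bt n \<le> ee n * (1/2)" using ee_pos[of n] bt_half[of n] by (intro mult_left_mono) auto
  then show ?thesis by (simp add: ee_Suc)
qed

lemma ee_le: "ee n \<le> (1/2) ^ n"
proof (induction n)
  case 0 then show ?case by (simp add: ee_def)
next
  case (Suc n) then show ?case using ee_half[of n] by simp
qed

lemma ee_lim: "ee \<longlonglongrightarrow> 0"
proof (rule Lim_null_comparison[OF _ LIMSEQ_power_zero[of "1/2::real"]])
  show "\<forall>\<^sub>F n in sequentially. norm (ee n) \<le> (1/2) ^ n"
    using ee_le ee_pos by (simp add: less_imp_le)
qed simp

lemma ee_dec: "m \<le> n \<Longrightarrow> ee n \<le> ee m"
proof -
  have "ee (Suc j) \<le> ee j" for j using ee_half[of j] ee_pos[of j] by linarith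
  then have "decseq ee" by (rule decseq_SucI)
  then show "m \<le> n \<Longrightarrow> ee n \<le> ee m" by (simp add: decseq_def)
qed

lemma norm_cc: "norm (cc n) powr q = ee n"
  using ee_pos[of n] qpos by (simp add: cc_def powr_powr)

lemma cc_nz: "cc n \<noteq> 0"
  using ee_pos[of n] by (simp add: cc_def)

lemma SS_V: "SS d N \<in> V"
  unfolding SS_def by (intro V_sum V_scale zzV)

end


context sqs2
begin

lemma tail_bound:
  assumes L: "\<And>j. m \<le> j \<Longrightarrow> norm (d j) \<le> L" and "m \<le> M"
  shows "rho (\<Sum>j\<in>{m..<M}. seq_scale s (d j * cc j) (zz j)) \<le> L powr q * Ra * (2 * ee m)"
proof -
  have L0: "0 \<le> L" using L[of m] norm_ge_zero[of "d m"] by linarith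
  have "rho (\<Sum>j\<in>{m..<M}. seq_scale s (d j * cc j) (zz j)) \<le> (\<Sum>j\<in>{m..<M}. rho (seq_scale s (d j * cc j) (zz j)))"
    by (rule rho_sum) (auto intro: V_scale zzV)
  also have "\<dots> \<le> (\<Sum>j\<in>{m..<M}. L powr q * Ra * ee j)"
  proof (rule sum_mono)
    fix j assume j: "j \<in> {m..<M}"
    have "rho (seq_scale s (d j * cc j) (zz j)) = norm (d j) powr q * ee j * rho (zz j)"
      by (simp add: rho_scale zzV norm_mult powr_mult norm_cc)
    also have "\<dots> \<le> L powr q * ee j * Ra"
      using j L[of j] qpos rho_zz[of j] ee_pos[of j] rho_nonneg[of "zz j"]
      by (intro mult_mono powr_mono2) auto
    finally show "rho (seq_scale s (d j * cc j) (zz j)) \<le> L powr q * Ra * ee j" by (simp add: ac_simps)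
  qed
  also have "\<dots> = L powr q * Ra * (\<Sum>j\<in>{m..<M}. ee j)" by (simp add: sum_distrib_left)
  also have "\<dots> \<le> L powr q * Ra * (2 * ee m)"
  proof -
    have "(\<Sum>j\<in>{m..<M}. ee j) \<le> 2 * ee m - 2 * ee M"
      using geom_sum_le[of ee m M] ee_pos ee_half \<open>m \<le> M\<close> by (simp add: less_imp_le)
    also have "\<dots> \<le> 2 * ee m" using ee_pos[of M] by simp
    finally show ?thesis using Ra_pos by (intro mult_left_mono) auto
  qed
  finally show ?thesis .
qed

lemma SS_split: "N \<le> M \<Longrightarrow> SS d M = SS d N + (\<Sum>j\<in>{N..<M}. seq_scale s (d j * cc j) (zz j))"
proof -
  assume NM: "N \<le> M"
  have e: "{..<M} = {..<N} \<union> {N..<M}" using NM by auto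
  show ?thesis unfolding SS_def by (subst e) (rule sum.union_disjoint, auto)
qed

lemma SS_conv:
  assumes L: "\<And>j. norm (d j) \<le> L"
  shows "\<exists>x\<in>V. (\<lambda>N. rho (SS d N - x)) \<longlonglongrightarrow> 0"
proof (rule complete_rho[OF SS_V])
  fix \<epsilon> :: real assume \<epsilon>: "\<epsilon> > 0"
  have "(\<lambda>N. L powr q * Ra * (2 * ee N)) \<longlonglongrightarrow> 0"
    using ee_lim by (intro tendsto_mult_right_zero) simp
  then have "\<forall>\<^sub>F N in sequentially. L powr q * Ra * (2 * ee N) < \<epsilon>"
    using \<epsilon> by (rule order_tendstoD(2))
  then obtain N where N: "L powr q * Ra * (2 * ee N) < \<epsilon>" by (auto simp: eventually_sequentially)
  have *: "rho (SS d m - SS d n) < \<epsilon>" if "N \<le> n" "n \<le> m" for m n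
  proof -
    have "SS d m - SS d n = (\<Sum>j\<in>{n..<m}. seq_scale s (d j * cc j) (zz j))"
      using SS_split[OF that(2), of d] by simp
    then have "rho (SS d m - SS d n) \<le> L powr q * Ra * (2 * ee n)"
      using tail_bound[OF L that(2)] by simp
    also have "\<dots> \<le> L powr q * Ra * (2 * ee N)"
      using ee_dec[OF that(1)] Ra_pos by (intro mult_left_mono) auto
    finally show ?thesis using N by linarith
  qed
  show "\<exists>N. \<forall>m\<ge>N. \<forall>n\<ge>N. rho (SS d m - SS d n) < \<epsilon>"
  proof (intro exI allI impI)
    fix m n assume "N \<le> m" "N \<le> n"
    then show "rho (SS d m - SS d n) < \<epsilon>"
      using *[of n m] *[of m n] rho_diff_sym[OF SS_V SS_V, of d m d n] by (cases "n \<le> m") auto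
  qed
qed

lemma keyK:
  assumes L: "\<And>j. n < j \<Longrightarrow> norm (d j) \<le> L" and dn: "norm (d n) = L" and Lpos: "0 < L"
    and lim: "(\<lambda>N. rho (SS d N)) \<longlonglongrightarrow> 0"
  shows False
proof -
  let ?P = "SS d n"
  have PS: "?P \<in> W.span (Zs n)"
    unfolding SS_def Zs_def by (intro W.span_sum W.span_scale W.span_base) auto
  define \<gamma> where "\<gamma> = d n * cc n"
  have gnz: "\<gamma> \<noteq> 0" using dn Lpos cc_nz by (auto simp: \<gamma>_def)
  let ?f = "- seq_scale s (inverse \<gamma>) ?P"
  have fS: "?f \<in> W.span (Zs n)" by (simp add: W.span_neg W.span_scale PS)
  have fV: "?f \<in> V" using fS span_V Zs_V by blast
  have "seq_scale s \<gamma> (zz n - ?f) = seq_scale s \<gamma> (zz n) + seq_scale s (\<gamma> * inverse \<gamma>) ?P"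
    by (simp only: diff_minus_eq_add W.scale_right_distrib W.scale_scale)
  also have "\<dots> = ?P + seq_scale s \<gamma> (zz n)" using gnz by (simp add: add.commute)
  also have "\<dots> = SS d (Suc n)" by (simp add: SS_def \<gamma>_def)
  finally have H: "SS d (Suc n) = seq_scale s \<gamma> (zz n - ?f)" by simp
  define K0 where "K0 = L powr q * ee n * dl n"
  have K0pos: "0 < K0" using Lpos ee_pos[of n] dl_prop[of n] by (simp add: K0_def)
  have "rho (SS d (Suc n)) = norm \<gamma> powr q * rho (zz n - ?f)"
    using H rho_scale[OF V_diff[OF zzV fV]] by simp
  also have "norm \<gamma> powr q = L powr q * ee n"
    by (simp add: \<gamma>_def norm_mult powr_mult norm_cc dn)
  finally have eqr: "rho (SS d (Suc n)) = L powr q * ee n * rho (zz n - ?f)" .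
  have dlb: "dl n \<le> rho (zz n - ?f)" using dl_prop[of n] fS by blast
  have "L powr q * ee n * dl n \<le> L powr q * ee n * rho (zz n - ?f)"
    using dlb Lpos ee_pos[of n] by (intro mult_left_mono) auto
  then have "rho (SS d (Suc n)) \<ge> K0" unfolding K0_def eqr .
  have tb: "rho (\<Sum>j\<in>{Suc n..<N}. seq_scale s (d j * cc j) (zz j)) \<le> K0 / 2" if "Suc n \<le> N" for N
  proof -
    have "rho (\<Sum>j\<in>{Suc n..<N}. seq_scale s (d j * cc j) (zz j)) \<le> L powr q * Ra * (2 * ee (Suc n))"
      by (rule tail_bound) (use L that in auto)
    also have "\<dots> = L powr q * ee n * (2 * Ra * bt n)" by (simp add: ee_Suc ac_simps)
    also have "\<dots> \<le> L powr q * ee n * (2 * Ra * (dl n / (4 * Ra)))"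
      using bt_dl[of n] Ra_pos ee_pos[of n] by (intro mult_left_mono) auto
    also have "\<dots> = K0 / 2" using Ra_pos by (simp add: K0_def field_simps)
    finally show ?thesis .
  qed
  have low: "K0 / 2 \<le> rho (SS d N)" if "Suc n \<le> N" for N
  proof -
    have "SS d (Suc n) = SS d N - (\<Sum>j\<in>{Suc n..<N}. seq_scale s (d j * cc j) (zz j))"
      using SS_split[OF that, of d] by simp
    moreover have Tv: "(\<Sum>j\<in>{Suc n..<N}. seq_scale s (d j * cc j) (zz j)) \<in> V"
      by (intro V_sum V_scale zzV)
    ultimately have "rho (SS d (Suc n)) \<le> rho (SS d N) + rho (\<Sum>j\<in>{Suc n..<N}. seq_scale s (d j * cc j) (zz j))"
      using rho_diff[OF SS_V[of d N] Tv] by simp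
    then show ?thesis using tb[OF that] \<open>rho (SS d (Suc n)) \<ge> K0\<close> by linarith
  qed
  have "\<forall>\<^sub>F N in sequentially. rho (SS d N) < K0 / 2"
    using lim K0pos by (intro order_tendstoD(2)) auto
  then obtain N0 where N0: "\<And>N. N \<ge> N0 \<Longrightarrow> rho (SS d N) < K0 / 2" by (auto simp: eventually_sequentially)
  show False using N0[of "max N0 (Suc n)"] low[of "max N0 (Suc n)"] by simp
qed

end


definition key :: "real \<Rightarrow> nat \<Rightarrow> nat" where
  "key r n = prod_encode (n, int_encode \<lfloor>2 ^ n * r\<rfloor>)"

definition Ar where "Ar r = range (key r)"

lemma key_ge: "n \<le> key r n"
  by (simp add: key_def le_prod_encode_1)

lemma floors_differ:
  assumes "r \<noteq> (r'::real)"
  shows "\<exists>N. \<forall>n\<ge>N. \<lfloor>2 ^ n * r\<rfloor> \<noteq> \<lfloor>2 ^ n * r'\<rfloor>"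
proof -
  have pos: "0 < \<bar>r - r'\<bar>" using assms by simp
  obtain N where N: "1 / \<bar>r - r'\<bar> < 2 ^ N" using real_arch_pow[of 2 "1 / \<bar>r - r'\<bar>"] by auto
  have "\<lfloor>2 ^ n * r\<rfloor> \<noteq> \<lfloor>2 ^ n * r'\<rfloor>" if "n \<ge> N" for n
  proof
    assume eq: "\<lfloor>2 ^ n * r\<rfloor> = \<lfloor>2 ^ n * r'\<rfloor>"
    have "\<bar>2 ^ n * r - 2 ^ n * r'\<bar> < 1"
      using eq by linarith
    then have "2 ^ n * \<bar>r - r'\<bar> < 1" by (simp add: abs_mult right_diff_distrib[symmetric])
    moreover have "(2::real) ^ N \<le> 2 ^ n" using that by (simp add: power_increasing)
    ultimately have "2 ^ N * \<bar>r - r'\<bar> < 1" using pos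
      by (meson le_less_trans mult_right_mono less_imp_le)
    then show False using N pos by (simp add: field_simps)
  qed
  then show ?thesis by blast
qed

lemma Ar_inter_finite:
  assumes "r \<noteq> r'"
  shows "finite (Ar r \<inter> Ar r')"
proof -
  obtain N where N: "\<forall>n\<ge>N. \<lfloor>2 ^ n * r\<rfloor> \<noteq> \<lfloor>2 ^ n * r'\<rfloor>" using floors_differ[OF assms] by blast
  have "Ar r \<inter> Ar r' \<subseteq> key r ` {..<N}"
  proof
    fix j assume "j \<in> Ar r \<inter> Ar r'"
    then have "j \<in> range (key r)" "j \<in> range (key r')" by (auto simp: Ar_def)
    then obtain n m where j: "j = key r n" "j = key r' m" by blast
    then have "n = m" "\<lfloor>2 ^ n * r\<rfloor> = \<lfloor>2 ^ n * r'\<rfloor>" by (auto simp: key_def int_encode_eq)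
    then have "n < N" using N by (meson not_le)
    then show "j \<in> key r ` {..<N}" using j by auto
  qed
  then show ?thesis by (rule finite_subset) auto
qed

context sqs2
begin

definition chi :: "real \<Rightarrow> nat \<Rightarrow> 'k" where "chi r j = (if j \<in> Ar r then 1 else 0)"
definition uu where "uu r = (SOME x. x \<in> V \<and> (\<lambda>N. rho (SS (chi r) N - x)) \<longlonglongrightarrow> 0)"

lemma uu_prop: "uu r \<in> V \<and> (\<lambda>N. rho (SS (chi r) N - uu r)) \<longlonglongrightarrow> 0"
proof -
  have "\<exists>x\<in>V. (\<lambda>N. rho (SS (chi r) N - x)) \<longlonglongrightarrow> 0"
    by (rule SS_conv[of _ 1]) (simp add: chi_def)
  then have "\<exists>x. x \<in> V \<and> (\<lambda>N. rho (SS (chi r) N - x)) \<longlonglongrightarrow> 0" by blast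
  then show ?thesis unfolding uu_def by (rule someI_ex)
qed

lemma SS_lin:
  assumes "finite R"
  shows "SS (\<lambda>j. \<Sum>r\<in>R. l r * chi r j) N = (\<Sum>r\<in>R. seq_scale s (l r) (SS (chi r) N))"
proof -
  have "SS (\<lambda>j. \<Sum>r\<in>R. l r * chi r j) N = (\<Sum>j<N. \<Sum>r\<in>R. seq_scale s (l r) (seq_scale s (chi r j * cc j) (zz j)))"
    unfolding SS_def by (simp add: sum_distrib_right W.scale_sum_left mult.assoc)
  also have "\<dots> = (\<Sum>r\<in>R. \<Sum>j<N. seq_scale s (l r) (seq_scale s (chi r j * cc j) (zz j)))"
    by (rule sum.swap)
  also have "\<dots> = (\<Sum>r\<in>R. seq_scale s (l r) (SS (chi r) N))"
    unfolding SS_def by (simp add: W.scale_sum_right)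
  finally show ?thesis .
qed

lemma indep_uu:
  assumes R: "finite R" and sum0: "(\<Sum>r\<in>R. seq_scale s (l r) (uu r)) = 0" and r0: "r0 \<in> R"
  shows "l r0 = 0"
proof (rule ccontr)
  assume l0: "l r0 \<noteq> 0"
  define d where "d j = (\<Sum>r\<in>R. l r * chi r j)" for j
  have uV: "uu r \<in> V" for r using uu_prop by blast
  have dfun: "d = (\<lambda>j. \<Sum>r\<in>R. l r * chi r j)" by (simp add: d_def fun_eq_iff)
  have lim: "(\<lambda>N. rho (SS d N)) \<longlonglongrightarrow> 0"
  proof -
    have eq: "SS d N = (\<Sum>r\<in>R. seq_scale s (l r) (SS (chi r) N - uu r))" for N
    proof -
      have "SS d N = SS d N - (\<Sum>r\<in>R. seq_scale s (l r) (uu r))" using sum0 by simp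
      also have "\<dots> = (\<Sum>r\<in>R. seq_scale s (l r) (SS (chi r) N)) - (\<Sum>r\<in>R. seq_scale s (l r) (uu r))"
        using SS_lin[OF R, of l N] dfun by simp
      also have "\<dots> = (\<Sum>r\<in>R. seq_scale s (l r) (SS (chi r) N - uu r))"
        by (simp add: sum_subtractf W.scale_right_diff_distrib)
      finally show ?thesis .
    qed
    have bnd: "rho (SS d N) \<le> (\<Sum>r\<in>R. norm (l r) powr q * rho (SS (chi r) N - uu r))" for N
    proof -
      have "rho (SS d N) \<le> (\<Sum>r\<in>R. rho (seq_scale s (l r) (SS (chi r) N - uu r)))"
        unfolding eq[of N] using R by (intro rho_sum V_scale V_diff SS_V uV)
      also have "\<dots> = (\<Sum>r\<in>R. norm (l r) powr q * rho (SS (chi r) N - uu r))"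
        by (intro sum.cong refl rho_scale V_diff SS_V uV)
      finally show ?thesis .
    qed
    have "(\<lambda>N. \<Sum>r\<in>R. norm (l r) powr q * rho (SS (chi r) N - uu r)) \<longlonglongrightarrow> 0"
      by (intro tendsto_null_sum tendsto_mult_right_zero) (use uu_prop in blast)
    then show ?thesis
      by (rule Lim_null_comparison[rotated]) (use bnd rho_nonneg in auto)
  qed
  define L where "L = Max ((\<lambda>r. norm (l r)) ` R)"
  have "L \<in> (\<lambda>r. norm (l r)) ` R" unfolding L_def using R r0 by (intro Max_in) auto
  then obtain r1 where r1: "r1 \<in> R" "norm (l r1) = L" by auto
  have Lge: "norm (l r) \<le> L" if "r \<in> R" for r
    using R that unfolding L_def by (intro Max_ge) auto
  have Lpos: "0 < L" using Lge[OF r0] l0 by (meson norm_le_zero_iff not_le order_le_less_trans zero_less_norm_iff)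
  define Bad where "Bad = (\<Union>r\<in>R. \<Union>r'\<in>R - {r}. Ar r \<inter> Ar r')"
  have "finite Bad" unfolding Bad_def using R by (intro finite_UN_I Ar_inter_finite) auto
  then obtain N1 where N1: "Bad \<subseteq> {..<N1}" using finite_nat_bounded by blast
  have uniq: "j \<notin> Ar r'" if "N1 \<le> j" "r \<in> R" "r' \<in> R" "r' \<noteq> r" "j \<in> Ar r" for j r r'
  proof
    assume "j \<in> Ar r'"
    then have "j \<in> Bad" unfolding Bad_def using that by blast
    then show False using N1 that by auto
  qed
  have d_val: "d j = l r" if "N1 \<le> j" "r \<in> R" "j \<in> Ar r" for j r
  proof -
    have "d j = l r * chi r j + (\<Sum>r'\<in>R - {r}. l r' * chi r' j)"
      unfolding d_def using R that(2) by (simp add: sum.remove)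
    also have "(\<Sum>r'\<in>R - {r}. l r' * chi r' j) = 0"
      using uniq[OF that(1,2) _ _ that(3)] by (intro sum.neutral) (auto simp: chi_def)
    finally show ?thesis using that by (simp add: chi_def)
  qed
  have d_zero: "d j = 0" if "\<forall>r\<in>R. j \<notin> Ar r" for j
    unfolding d_def using that by (intro sum.neutral) (auto simp: chi_def)
  have dL: "norm (d j) \<le> L" if "N1 \<le> j" for j
  proof (cases "\<exists>r\<in>R. j \<in> Ar r")
    case True
    then obtain r where "r \<in> R" "j \<in> Ar r" by blast
    then show ?thesis using d_val[OF that] Lge by auto
  next
    case False
    then show ?thesis using d_zero Lpos by auto
  qed
  define n where "n = key r1 N1"
  have nN: "N1 \<le> n" using key_ge by (simp add: n_def)
  have nA: "n \<in> Ar r1" by (simp add: n_def Ar_def)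
  show False
  proof (rule keyK[of n d L])
    show "norm (d j) \<le> L" if "n < j" for j using dL that nN by auto
    show "norm (d n) = L" using d_val[OF nN r1(1) nA] r1(2) by simp
  qed (use Lpos lim in auto)
qed

lemma inj_uu: "inj uu"
proof (rule injI, rule ccontr)
  fix r r' assume eq: "uu r = uu r'" and ne: "r \<noteq> r'"
  define l where "l x = (if x = r then 1 else - 1 :: 'k)" for x
  have "(\<Sum>x\<in>{r, r'}. seq_scale s (l x) (uu x)) = 0"
    using ne eq by (simp add: l_def W.scale_minus_left)
  then have "l r = 0" using indep_uu[of "{r, r'}" l r] by auto
  then show False by (simp add: l_def)
qed

lemma indep_range: "\<not> W.dependent (range uu)"
proof
  assume "W.dependent (range uu)"
  then obtain t u where t: "finite t" "t \<subseteq> range uu" "(\<Sum>v\<in>t. seq_scale s (u v) v) = 0" "\<exists>v\<in>t. u v \<noteq> 0"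
    unfolding W.dependent_explicit by blast
  define R where "R = uu -` t"
  have R: "finite R" unfolding R_def using t(1) inj_uu by (simp add: finite_vimageI)
  have tR: "t = uu ` R" unfolding R_def using t(2) by auto
  have "(\<Sum>r\<in>R. seq_scale s (u (uu r)) (uu r)) = 0"
    using t(3) inj_uu unfolding tR by (simp add: sum.reindex inj_on_def)
  then have "\<forall>r\<in>R. u (uu r) = 0" using R indep_uu[of R "\<lambda>r. u (uu r)"] by blast
  then show False using t(4) tR by auto
qed

lemma dimc: "dim_ge_continuum (seq_scale s) V"
  unfolding dim_ge_continuum_def
proof (intro allI impI)
  fix B assume B: "B \<subseteq> V \<and> \<not> W.dependent B \<and> W.span B = V"
  have rV: "range uu \<subseteq> V" using uu_prop by blast
  obtain C where C: "range uu \<subseteq> C" "C \<subseteq> V" "\<not> W.dependent C" "V \<subseteq> W.span C"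
    using W.maximal_independent_subset_extend[OF rV indep_range] by blast
  have "W.span C = W.span B" using C B span_V[OF C(2)] by auto
  then obtain f where f: "bij_betw f C B" using W.bij_if_span_eq_span_bases C(3) B by blast
  show "\<exists>g :: real \<Rightarrow> nat \<Rightarrow> 'w. inj g \<and> range g \<subseteq> B"
  proof (intro exI conjI)
    show "inj (f \<circ> uu)"
      using inj_uu bij_betw_imp_inj_on[OF f] C(1) by (auto intro: comp_inj_on inj_on_subset)
    show "range (f \<circ> uu) \<subseteq> B" using bij_betw_imp_surj_on[OF f] C(1) by auto
  qed
qed

end

lemma (in sqs) main_sqs:
  assumes "V \<noteq> {0}"
  shows "dim_ge_continuum (seq_scale s) V"
proof -
  obtain a where a: "a \<in> V" "a \<noteq> 0" using assms V0 by blast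
  then obtain k where k: "a k \<noteq> 0" by (auto simp: fun_eq_iff)
  interpret sqs2 s q V nv a k by unfold_locales (use a k in auto)
  show ?thesis by (rule dimc)
qed


theorem lemma3p1:
  shows "(\<forall>(s :: real \<Rightarrow> 'w::ab_group_add \<Rightarrow> 'w) q V nv.
            vector_space s \<and> 0 < q \<and> q \<le> 1 \<and> spreading_q_space s q V nv \<and> V \<noteq> {0}
            \<longrightarrow> dim_ge_continuum (seq_scale s) V) \<and>
         (\<forall>(s :: complex \<Rightarrow> 'u::ab_group_add \<Rightarrow> 'u) q V nv.
            vector_space s \<and> 0 < q \<and> q \<le> 1 \<and> spreading_q_space s q V nv \<and> V \<noteq> {0}
            \<longrightarrow> dim_ge_continuum (seq_scale s) V)"
proof (intro conjI allI impI)
  fix s :: "real \<Rightarrow> 'w::ab_group_add \<Rightarrow> 'w" and q V nv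
  assume h: "vector_space s \<and> 0 < q \<and> q \<le> 1 \<and> spreading_q_space s q V nv \<and> V \<noteq> {0}"
  interpret sqs s q V nv using h by (intro sqs.intro) auto
  show "dim_ge_continuum (seq_scale s) V" using h by (intro main_sqs) auto
next
  fix s :: "complex \<Rightarrow> 'u::ab_group_add \<Rightarrow> 'u" and q V nv
  assume h: "vector_space s \<and> 0 < q \<and> q \<le> 1 \<and> spreading_q_space s q V nv \<and> V \<noteq> {0}"
  interpret sqs s q V nv using h by (intro sqs.intro) auto
  show "dim_ge_continuum (seq_scale s) V" using h by (intro main_sqs) auto
qed

end
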